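(* Let $X$ be a Banach space and $(A_m)_{m\in\mathbb{Z}}$ a sequence of invertible bounded linear operators on $X$ with $\sup_m\lVert A_m\rVert<\infty$ admitting an exponential dichotomy; let $c>0$ be a constant as described in the context (with $B=l^\infty$), and fix $D,r>0$. Then there exists $\delta>0$ such that the following holds. Let $g_n\colon X\to X$, $n\in\mathbb{Z}$, be differentiable maps with $\lVert d_xg_n\rVert\le c/2$, $\lVert d_xg_n-d_yg_n\rVert\le D\lVert x-y\rVert^r$ for all $x,y\in X$, $n\in\mathbb{Z}$, and $\sup_{x\in X}\lVert g_n(x)\rVert\le\delta$ for all $n$. If $(y_n)_{n\in\mathbb{Z}}\subset X$ satisfies $y_{n+1}=A_ny_n+g_n(y_n)$ for all $n\in\mathbb{Z}$ and $$\lambda:=\limsup_{n\to\infty}\frac1n\log\lVert y_n\rVert>0,$$ then there exists $(x_n)_{n\in\mathbb{Z}}\subset X$ with $x_{n+1}=A_nx_n$ for all $n\in\mathbb{Z}$ and $\lambda=\limsup_{n\to\infty}\frac1n\log\lVert x_n\rVert$.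
   Context: Exponential dichotomy: with $\mathcal A(m,n)=A_{m-1}\cdots A_n$ ($m>n$), $\mathrm{Id}$ ($m=n$), $A_m^{-1}\cdots A_{n-1}^{-1}$ ($m<n$), there exist projections $P_m$ with $P_{m+1}A_m=A_mP_m$ and $C,\lambda_0>0$ with $\lVert\mathcal A(m,n)P_n\rVert\le Ce^{-\lambda_0(m-n)}$ ($m\ge n$) and $\lVert\mathcal A(m,n)(\mathrm{Id}-P_n)\rVert\le Ce^{-\lambda_0(n-m)}$ ($m\le n$). The constant $c>0$ is such that there is $K>0$ for which every sequence $(B_m)$ of bounded operators on $X$ with $\sup_m\lVert A_m-B_m\rVert\le c$ admits an exponential dichotomy and the operator $(\mathbb B\mathbf x)_n=B_{n-1}x_{n-1}$ on the space of bounded sequences $(x_n)_{n\in\mathbb{Z}}\subset X$ with the sup norm has $\mathrm{Id}-\mathbb B$ invertible with $\lVert(\mathrm{Id}-\mathbb B)^{-1}\rVert\le K$. *)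

theory Defs
  imports "HOL-Analysis.Analysis"
begin

definition binvertible :: "('a::real_normed_vector \<Rightarrow>\<^sub>L 'a) \<Rightarrow> bool" where
  "binvertible T \<longleftrightarrow> (\<exists>S. T o\<^sub>L S = id_blinfun \<and> S o\<^sub>L T = id_blinfun)"

definition binv :: "('a::real_normed_vector \<Rightarrow>\<^sub>L 'a) \<Rightarrow> ('a \<Rightarrow>\<^sub>L 'a)" where
  "binv T = (SOME S. T o\<^sub>L S = id_blinfun \<and> S o\<^sub>L T = id_blinfun)"

fun prodA :: "(int \<Rightarrow> ('a::real_normed_vector \<Rightarrow>\<^sub>L 'a)) \<Rightarrow> int \<Rightarrow> nat \<Rightarrow> ('a \<Rightarrow>\<^sub>L 'a)" where
  "prodA A n 0 = id_blinfun"
| "prodA A n (Suc k) = A (n + int k) o\<^sub>L prodA A n k"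

text \<open>The cocycle: A(m,n) = A_{m-1}...A_n for m \<ge> n, and
  A_m^{-1}...A_{n-1}^{-1} = (A_{n-1}...A_m)^{-1} for m < n.\<close>
definition cocycle :: "(int \<Rightarrow> ('a::real_normed_vector \<Rightarrow>\<^sub>L 'a)) \<Rightarrow> int \<Rightarrow> int \<Rightarrow> ('a \<Rightarrow>\<^sub>L 'a)" where
  "cocycle A m n = (if n \<le> m then prodA A n (nat (m - n)) else binv (prodA A m (nat (n - m))))"

definition exp_dichotomy :: "(int \<Rightarrow> ('a::real_normed_vector \<Rightarrow>\<^sub>L 'a)) \<Rightarrow> bool" where
  "exp_dichotomy A \<longleftrightarrow> (\<forall>m. binvertible (A m)) \<and>
     (\<exists>P C lam0. C > 0 \<and> lam0 > 0 \<and>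
        (\<forall>m. P m o\<^sub>L P m = P m) \<and>
        (\<forall>m. P (m + 1) o\<^sub>L A m = A m o\<^sub>L P m) \<and>
        (\<forall>m n. n \<le> m \<longrightarrow> norm (cocycle A m n o\<^sub>L P n) \<le> C * exp (- lam0 * real_of_int (m - n))) \<and>
        (\<forall>m n. m \<le> n \<longrightarrow> norm (cocycle A m n o\<^sub>L (id_blinfun - P n)) \<le> C * exp (- lam0 * real_of_int (n - m))))"

text \<open>(Id - \<bbbB>) is invertible on l^\<infinity>(\<int>, X) with inverse of norm \<le> K, where
  (\<bbbB> x)_n = B_{n-1} x_{n-1}.\<close>
definition linf_invertible :: "(int \<Rightarrow> ('a::real_normed_vector \<Rightarrow>\<^sub>L 'a)) \<Rightarrow> real \<Rightarrow> bool" where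
  "linf_invertible B K \<longleftrightarrow>
     (\<forall>y::int \<Rightarrow> 'a. bounded (range y) \<longrightarrow>
        (\<exists>!x::int \<Rightarrow> 'a. bounded (range x) \<and> (\<forall>n. x n - B (n - 1) (x (n - 1)) = y n)) \<and>
        (\<forall>x::int \<Rightarrow> 'a. bounded (range x) \<and> (\<forall>n. x n - B (n - 1) (x (n - 1)) = y n) \<longrightarrow>
           (SUP n. norm (x n)) \<le> K * (SUP n. norm (y n))))"

definition admissible_const :: "(int \<Rightarrow> ('a::real_normed_vector \<Rightarrow>\<^sub>L 'a)) \<Rightarrow> real \<Rightarrow> bool" where
  "admissible_const A c \<longleftrightarrow> c > 0 \<and>
     (\<exists>K>0. \<forall>B. (\<forall>m. norm (A m - B m) \<le> c) \<longrightarrow> exp_dichotomy B \<and> linf_invertible B K)"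

definition growth_rate :: "(int \<Rightarrow> 'a::real_normed_vector) \<Rightarrow> ereal" where
  "growth_rate y = limsup (\<lambda>n::nat. if y (int n) = 0 then -\<infinity> else ereal (ln (norm (y (int n))) / real n))"

end

theory Submission imports Defs begin

lemma ev_gap:
  fixes s t M :: real
  assumes "0 < s" "s < t"
  shows "eventually (\<lambda>n::nat. M \<le> exp (t * real n) - exp (s * real n)) sequentially"
proof -
  obtain N :: nat where N: "M / (t - s) \<le> real N" using real_arch_simple by blast
  have "M \<le> exp (t * real n) - exp (s * real n)" if "n \<ge> N" for n
  proof -
    have "M \<le> (t - s) * real n"
    proof -
      have "M \<le> (t - s) * real N" using N assms by (simp add: pos_divide_le_eq mult.commute)
      also have "\<dots> \<le> (t - s) * real n" using that assms by (intro mult_left_mono) auto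
      finally show ?thesis .
    qed
    also have "\<dots> \<le> exp ((t - s) * real n) - 1"
      using exp_ge_add_one_self[of "(t - s) * real n"] by linarith
    also have "\<dots> \<le> exp (s * real n) * (exp ((t - s) * real n) - 1)"
    proof -
      have "1 \<le> exp (s * real n)" using assms by simp
      moreover have "0 \<le> exp ((t - s) * real n) - 1" using assms by simp
      ultimately show ?thesis using mult_right_mono[of 1 "exp (s * real n)" "exp ((t - s) * real n) - 1"] by simp
    qed
    also have "\<dots> = exp (t * real n) - exp (s * real n)"
      by (simp add: algebra_simps flip: exp_add)
    finally show ?thesis .
  qed
  then show ?thesis unfolding eventually_sequentially by blast
qed
lemma growth_ge:
  fixes x y :: "int \<Rightarrow> 'a::real_normed_vector" and M :: real
  assumes M: "\<And>n. norm (x n - y n) \<le> M"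
    and pos: "growth_rate y > 0"
  shows "growth_rate y \<le> growth_rate x"
proof (rule ccontr)
  define a where "a = (\<lambda>n::nat. if y (int n) = 0 then -\<infinity> else ereal (ln (norm (y (int n))) / real n))"
  define b where "b = (\<lambda>n::nat. if x (int n) = 0 then -\<infinity> else ereal (ln (norm (x (int n))) / real n))"
  have ga: "growth_rate y = limsup a" and gb: "growth_rate x = limsup b"
    unfolding growth_rate_def a_def b_def by auto
  assume "\<not> growth_rate y \<le> growth_rate x"
  hence lt: "limsup b < limsup a" using ga gb by auto
  have "max (limsup b) 0 < limsup a" using lt pos ga by auto
  then obtain s where s1: "max (limsup b) 0 < ereal s" and s2: "ereal s < limsup a"
    using ereal_dense2 by blast
  then obtain t where t1: "ereal s < ereal t" and t2: "ereal t < limsup a"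
    using ereal_dense2 by blast
  have s0: "0 < s" using s1 by auto
  have st: "s < t" using t1 by auto
  have evb: "eventually (\<lambda>n. b n < ereal s) sequentially"
    using s1 by (intro Limsup_lessD) auto
  have "\<not> limsup a \<le> ereal t" using t2 by auto
  then obtain w where w: "w > ereal t" "\<not> eventually (\<lambda>n. w > a n) sequentially"
    using Limsup_le_iff[of sequentially a "ereal t"] by auto
  have fra: "frequently (\<lambda>n. ereal t < a n) sequentially"
  proof -
    have "frequently (\<lambda>n. \<not> w > a n) sequentially" using w(2) by (simp add: not_eventually)
    thus ?thesis
    proof (rule frequently_elim1)
      fix n assume "\<not> w > a n"
      hence "w \<le> a n" by (simp add: not_less)
      thus "ereal t < a n" using w(1) by (rule order_less_le_trans[rotated])
    qed
  qed
  have evg: "eventually (\<lambda>n::nat. M \<le> exp (t * real n) - exp (s * real n)) sequentially"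
    by (rule ev_gap[OF s0 st])
  have "frequently (\<lambda>n. (b n < ereal s \<and> M \<le> exp (t * real n) - exp (s * real n)) \<and> ereal t < a n) sequentially"
    by (rule frequently_eventually_conj[OF fra]) (use evb evg in \<open>eventually_elim, auto\<close>)
  then obtain n where n1: "b n < ereal s" and n2: "M \<le> exp (t * real n) - exp (s * real n)"
    and n3: "ereal t < a n"
    using frequently_ex by blast
  have yn: "y (int n) \<noteq> 0" using n3 unfolding a_def by (auto split: if_splits)
  have ta: "t < ln (norm (y (int n))) / real n" using n3 yn unfolding a_def by auto
  have npos: "n > 0"
  proof (rule ccontr)
    assume "\<not> n > 0" hence "n = 0" by auto
    thus False using ta st s0 by auto
  qed
  have "t * real n < ln (norm (y (int n)))" using ta npos by (simp add: pos_less_divide_eq)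
  hence "exp (t * real n) < exp (ln (norm (y (int n))))" by simp
  hence ny: "exp (t * real n) < norm (y (int n))" using yn by simp
  have "norm (y (int n)) \<le> norm (x (int n)) + norm (x (int n) - y (int n))"
    by (metis add.commute diff_add_cancel norm_minus_commute norm_triangle_ineq)
  hence nx: "exp (s * real n) < norm (x (int n))" using ny n2 M[of "int n"] by linarith
  have xpos: "norm (x (int n)) > 0" using nx exp_gt_zero[of "s * real n"] by linarith
  hence xn: "x (int n) \<noteq> 0" by simp
  have "ln (exp (s * real n)) < ln (norm (x (int n)))" using nx xpos by (subst ln_less_cancel_iff) auto
  hence "s * real n < ln (norm (x (int n)))" by simp
  hence "s < ln (norm (x (int n))) / real n" using npos by (simp add: pos_less_divide_eq)
  thus False using n1 xn unfolding b_def by auto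
qed

theorem corollary4p3:
  fixes A :: "int \<Rightarrow> ('a::banach \<Rightarrow>\<^sub>L 'a)" and c D r :: real
  assumes "\<forall>m. binvertible (A m)"
    and "bdd_above (range (\<lambda>m. norm (A m)))"
    and "exp_dichotomy A"
    and "admissible_const A c"
    and "D > 0" and "r > 0"
  shows "\<exists>\<delta>>0. \<forall>(g :: int \<Rightarrow> 'a \<Rightarrow> 'a) (dg :: int \<Rightarrow> 'a \<Rightarrow> ('a \<Rightarrow>\<^sub>L 'a)) (y :: int \<Rightarrow> 'a).
           (\<forall>n x. (g n has_derivative blinfun_apply (dg n x)) (at x)) \<and>
           (\<forall>n x. norm (dg n x) \<le> c / 2) \<and>
           (\<forall>n x z. norm (dg n x - dg n z) \<le> D * norm (x - z) powr r) \<and>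
           (\<forall>n x. norm (g n x) \<le> \<delta>) \<and>
           (\<forall>n. y (n + 1) = A n (y n) + g n (y n)) \<and>
           growth_rate y > 0
           \<longrightarrow> (\<exists>x :: int \<Rightarrow> 'a. (\<forall>n. x (n + 1) = A n (x n)) \<and> growth_rate x = growth_rate y)"
proof -
  obtain K where K: "K > 0" "\<And>B. (\<forall>m. norm (A m - B m) \<le> c) \<Longrightarrow> exp_dichotomy B \<and> linf_invertible B K"
    and c0: "c > 0"
    using assms(4) unfolding admissible_const_def by blast
  have inv: "linf_invertible A K" using K(2)[of A] c0 by auto
  show ?thesis
  proof (intro exI[of _ 1] conjI allI impI)
    show "(0::real) < 1" by simp
    fix g :: "int \<Rightarrow> 'a \<Rightarrow> 'a" and dg :: "int \<Rightarrow> 'a \<Rightarrow> ('a \<Rightarrow>\<^sub>L 'a)" and y :: "int \<Rightarrow> 'a"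
    assume H: "(\<forall>n x. (g n has_derivative blinfun_apply (dg n x)) (at x)) \<and>
           (\<forall>n x. norm (dg n x) \<le> c / 2) \<and>
           (\<forall>n x z. norm (dg n x - dg n z) \<le> D * norm (x - z) powr r) \<and>
           (\<forall>n x. norm (g n x) \<le> 1) \<and>
           (\<forall>n. y (n + 1) = A n (y n) + g n (y n)) \<and>
           growth_rate y > 0"
    hence gb: "\<And>n x. norm (g n x) \<le> 1" and ye: "\<And>n. y (n + 1) = A n (y n) + g n (y n)"
      and gp: "growth_rate y > 0" by auto
    define w where "w = (\<lambda>n. g (n - 1) (y (n - 1)))"
    have wb: "bounded (range w)" unfolding bounded_iff w_def using gb by blast
    then obtain z where zb: "bounded (range z)" and ze: "\<forall>n. z n - A (n - 1) (z (n - 1)) = w n"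
      using inv unfolding linf_invertible_def by blast
    obtain M where M: "\<And>n. norm (z n) \<le> M" using zb unfolding bounded_iff by blast
    define x where "x = (\<lambda>n. y n - z n)"
    have xe: "\<forall>n. x (n + 1) = A n (x n)"
    proof
      fix n
      have "z (n + 1) = A n (z n) + g n (y n)" using ze[rule_format, of "n+1"] unfolding w_def
        by (simp add: algebra_simps)
      thus "x (n + 1) = A n (x n)" unfolding x_def using ye[of n]
        by (simp add: blinfun.diff_right)
    qed
    have d1: "\<And>n. norm (x n - y n) \<le> M" unfolding x_def using M by (simp add: norm_minus_commute)
    have d2: "\<And>n. norm (y n - x n) \<le> M" unfolding x_def using M by simp
    have le1: "growth_rate y \<le> growth_rate x" by (rule growth_ge[OF d1 gp])
    hence "growth_rate x > 0" using gp by auto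
    hence le2: "growth_rate x \<le> growth_rate y" by (rule growth_ge[OF d2])
    show "\<exists>x :: int \<Rightarrow> 'a. (\<forall>n. x (n + 1) = A n (x n)) \<and> growth_rate x = growth_rate y"
      using xe le1 le2 by (intro exI[of _ x]) auto
  qed
qed

end
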